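(* Assume the standing hypotheses (H). If $\{u,v\}$ is a part of $G$ of size $2$, then $L(u)\cap L(v)=\varnothing$.
   Context: A list assignment $L$ assigns to each vertex $v$ a set $L(v)$ of colors; an $L$-coloring is a proper coloring $f$ with $f(v)\in L(v)$ for all $v$; $\mathrm{ch}$ denotes choice number and $\chi$ chromatic number. A part of a complete multipartite graph is one of its maximal stable sets. Standing hypotheses (H): $k\ge1$ and $n\ge 2k+2$ are integers; $G$ is a complete $k$-partite graph (exactly $k$ nonempty parts) on $n$ vertices; $L$ is a list assignment for $G$ with $|L(v)|\ge\lceil (n+k-1)/3\rceil$ for every vertex $v$; $G$ has no $L$-coloring; $\left|\bigcup_{v\in V(G)}L(v)\right|\le n-1$; and every graph $H$ with fewer than $n$ vertices satisfies $\mathrm{ch}(H)\le\max\{\chi(H),\lceil(|V(H)|+\chi(H)-1)/3\rceil\}$. *)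

theory Defs
  imports Complex_Main
begin

definition graph :: "'a set \<Rightarrow> ('a \<Rightarrow> 'a \<Rightarrow> bool) \<Rightarrow> bool" where
  "graph V E \<longleftrightarrow> finite V \<and>
     (\<forall>u v. E u v \<longrightarrow> u \<in> V \<and> v \<in> V \<and> u \<noteq> v \<and> E v u)"

definition proper_coloring :: "'a set \<Rightarrow> ('a \<Rightarrow> 'a \<Rightarrow> bool) \<Rightarrow> ('a \<Rightarrow> 'c) \<Rightarrow> bool" where
  "proper_coloring V E f \<longleftrightarrow> (\<forall>u\<in>V. \<forall>v\<in>V. E u v \<longrightarrow> f u \<noteq> f v)"

definition L_coloring :: "'a set \<Rightarrow> ('a \<Rightarrow> 'a \<Rightarrow> bool) \<Rightarrow> ('a \<Rightarrow> 'c set) \<Rightarrow> ('a \<Rightarrow> 'c) \<Rightarrow> bool" where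
  "L_coloring V E L f \<longleftrightarrow> proper_coloring V E f \<and> (\<forall>v\<in>V. f v \<in> L v)"

definition colorable :: "'a set \<Rightarrow> ('a \<Rightarrow> 'a \<Rightarrow> bool) \<Rightarrow> nat \<Rightarrow> bool" where
  "colorable V E k \<longleftrightarrow> (\<exists>f :: 'a \<Rightarrow> nat. proper_coloring V E f \<and> f ` V \<subseteq> {..<k})"

definition chromatic_number :: "'a set \<Rightarrow> ('a \<Rightarrow> 'a \<Rightarrow> bool) \<Rightarrow> nat" where
  "chromatic_number V E = (LEAST k. colorable V E k)"

definition choosable :: "'a set \<Rightarrow> ('a \<Rightarrow> 'a \<Rightarrow> bool) \<Rightarrow> nat \<Rightarrow> bool" where
  "choosable V E k \<longleftrightarrow> (\<forall>L :: 'a \<Rightarrow> nat set.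
      (\<forall>v\<in>V. finite (L v) \<and> card (L v) \<ge> k) \<longrightarrow> (\<exists>f. L_coloring V E L f))"

definition choice_number :: "'a set \<Rightarrow> ('a \<Rightarrow> 'a \<Rightarrow> bool) \<Rightarrow> nat" where
  "choice_number V E = (LEAST k. choosable V E k)"

definition stable :: "'a set \<Rightarrow> ('a \<Rightarrow> 'a \<Rightarrow> bool) \<Rightarrow> 'a set \<Rightarrow> bool" where
  "stable V E S \<longleftrightarrow> S \<subseteq> V \<and> (\<forall>u\<in>S. \<forall>v\<in>S. \<not> E u v)"

text \<open>A part of a complete multipartite graph: a maximal stable set.\<close>
definition is_part :: "'a set \<Rightarrow> ('a \<Rightarrow> 'a \<Rightarrow> bool) \<Rightarrow> 'a set \<Rightarrow> bool" where
  "is_part V E S \<longleftrightarrow> stable V E S \<and> (\<forall>T. stable V E T \<and> S \<subseteq> T \<longrightarrow> T = S)"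

definition complete_k_partite :: "'a set \<Rightarrow> ('a \<Rightarrow> 'a \<Rightarrow> bool) \<Rightarrow> nat \<Rightarrow> bool" where
  "complete_k_partite V E k \<longleftrightarrow> (\<exists>P. (\<forall>p\<in>P. p \<noteq> {} \<and> p \<subseteq> V) \<and> \<Union>P = V \<and>
      (\<forall>p\<in>P. \<forall>q\<in>P. p \<noteq> q \<longrightarrow> p \<inter> q = {}) \<and> finite P \<and> card P = k \<and>
      (\<forall>u v. E u v \<longleftrightarrow> u \<in> V \<and> v \<in> V \<and> \<not> (\<exists>p\<in>P. u \<in> p \<and> v \<in> p)))"

end

theory Submission
  imports Defs
begin
lemma greedy:
  assumes "finite V" "\<forall>x\<in>V. \<not> E x x"
    "\<forall>w\<in>V. finite (L w) \<and> card V \<le> card (L w)"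
  shows "\<exists>f. L_coloring V E L f"
  using assms
proof (induction V rule: finite_induct)
  case empty
  then show ?case by (auto simp: L_coloring_def proper_coloring_def)
next
  case (insert x F)
  have "\<forall>w\<in>F. finite (L w) \<and> card F \<le> card (L w)"
    using insert by (metis card_insert_le insertCI le_trans)
  with insert obtain f where f: "L_coloring F E L f" by auto
  have fin: "finite (L x)" "card (insert x F) \<le> card (L x)" using insert by auto
  have "card (f ` F) \<le> card F" by (rule card_image_le) (use insert in auto)
  also have "\<dots> < card (insert x F)" using insert by auto
  finally have "card (f ` F) < card (L x)" using fin by linarith
  then have "L x - f ` F \<noteq> {}"
    by (metis Diff_eq_empty_iff card_mono finite_imageI insert.hyps(1) leD)
  then obtain c where c: "c \<in> L x" "c \<notin> f ` F" by auto
  define g where "g = f(x := c)"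
  have "L_coloring (insert x F) E L g"
    unfolding L_coloring_def proper_coloring_def
  proof (intro conjI ballI impI)
    fix a b assume ab: "a \<in> insert x F" "b \<in> insert x F" "E a b"
    show "g a \<noteq> g b"
    proof (cases "a = x")
      case True
      then show ?thesis using ab c insert.prems insert.hyps g_def by auto
    next
      case False
      show ?thesis
      proof (cases "b = x")
        case True then show ?thesis using ab c False g_def by auto
      next
        case False2: False
        then show ?thesis using ab f False g_def
          by (auto simp: L_coloring_def proper_coloring_def)
      qed
    qed
  next
    fix a assume "a \<in> insert x F"
    then show "g a \<in> L a" using f c g_def insert.hyps by (auto simp: L_coloring_def)
  qed
  then show ?case by blast
qed

lemma choosable_mono: "choosable V E j \<Longrightarrow> j \<le> m \<Longrightarrow> choosable V E m"
  unfolding choosable_def by (meson le_trans)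

lemma choosable_ex: "graph V E \<Longrightarrow> choosable V E (choice_number V E)"
  unfolding choice_number_def
proof (rule LeastI)
  assume g: "graph V E"
  show "choosable V E (card V)" unfolding choosable_def
    using g greedy[of V E] by (auto simp: graph_def)
qed

lemma transfer:
  fixes W :: "'a set" and E :: "'a \<Rightarrow> 'a \<Rightarrow> bool" and L :: "'a \<Rightarrow> 'c set"
  assumes fin: "finite W" and irr: "\<forall>x\<in>W. \<not> E x x" and sym: "\<forall>x y. E x y \<longrightarrow> E y x"
    and lists: "\<forall>w\<in>W. finite (L w) \<and> M \<le> card (L w)"
    and col: "\<exists>\<phi>::'a\<Rightarrow>nat. proper_coloring W E \<phi> \<and> \<phi> ` W \<subseteq> {..<j}"
    and hyp: "\<forall>(VH :: nat set) EH. graph VH EH \<and> card VH < n \<longrightarrow>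
           int (choice_number VH EH) \<le> max (int (chromatic_number VH EH))
              \<lceil>(real (card VH) + real (chromatic_number VH EH) - 1) / 3\<rceil>"
    and cW: "card W < n"
    and bnd: "\<forall>\<chi>\<le>j. max (int \<chi>) \<lceil>(real (card W) + real \<chi> - 1) / 3\<rceil> \<le> int M"
  shows "\<exists>f. L_coloring W E L f"
proof -
  obtain g where g: "bij_betw g W {0..<card W}" using ex_bij_betw_finite_nat[OF fin] by blast
  define gi where "gi = inv_into W g"
  have gi_g: "\<And>w. w \<in> W \<Longrightarrow> gi (g w) = w" using g unfolding gi_def bij_betw_def by auto
  have gW: "\<And>w. w \<in> W \<Longrightarrow> g w \<in> {0..<card W}" using g unfolding bij_betw_def by auto
  have giW: "\<And>a. a \<in> {0..<card W} \<Longrightarrow> gi a \<in> W" using g unfolding gi_def bij_betw_def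
    by (metis inv_into_into)
  define C where "C = (\<Union>w\<in>W. L w)"
  have finC: "finite C" using fin lists unfolding C_def by auto
  obtain h where h: "bij_betw h C {0..<card C}" using ex_bij_betw_finite_nat[OF finC] by blast
  have hinj: "inj_on h C" using h bij_betw_def by blast
  define VH where "VH = {0..<card W}"
  define EH where "EH = (\<lambda>a b. a \<in> VH \<and> b \<in> VH \<and> E (gi a) (gi b))"
  define LH where "LH = (\<lambda>a. h ` L (gi a))"
  have gr: "graph VH EH" unfolding graph_def EH_def VH_def using irr sym giW by fastforce
  have cVH: "card VH < n" using cW VH_def by simp
  have colH: "colorable VH EH j"
  proof -
    from col obtain \<phi> :: "'a \<Rightarrow> nat" where \<phi>: "proper_coloring W E \<phi>" "\<phi> ` W \<subseteq> {..<j}" by blast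
    have "proper_coloring VH EH (\<phi> \<circ> gi)" using \<phi>(1) giW
      unfolding proper_coloring_def EH_def VH_def by auto
    moreover have "(\<phi> \<circ> gi) ` VH \<subseteq> {..<j}" using \<phi>(2) giW VH_def by fastforce
    ultimately show ?thesis unfolding colorable_def by blast
  qed
  have chi: "chromatic_number VH EH \<le> j" unfolding chromatic_number_def
    by (rule Least_le) (rule colH)
  have "int (choice_number VH EH) \<le> int M"
    using hyp gr cVH bnd chi by (metis VH_def card_atLeastLessThan diff_zero order_trans)
  then have "choice_number VH EH \<le> M" by simp
  then have ch: "choosable VH EH M" using choosable_mono choosable_ex[OF gr] by blast
  have "\<forall>a\<in>VH. finite (LH a) \<and> card (LH a) \<ge> M"
  proof
    fix a assume a: "a \<in> VH"
    then have w: "gi a \<in> W" using giW VH_def by auto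
    have "L (gi a) \<subseteq> C" using w C_def by auto
    then have "card (LH a) = card (L (gi a))" unfolding LH_def
      by (meson card_image hinj inj_on_subset)
    then show "finite (LH a) \<and> card (LH a) \<ge> M" using lists w LH_def by auto
  qed
  with ch obtain fH where fH: "L_coloring VH EH LH fH" unfolding choosable_def by blast
  define f where "f = (\<lambda>w. inv_into C h (fH (g w)))"
  have inL: "\<And>w. w \<in> W \<Longrightarrow> f w \<in> L w \<and> h (f w) = fH (g w)"
  proof -
    fix w assume w: "w \<in> W"
    then have "fH (g w) \<in> h ` L w" using fH gW gi_g unfolding L_coloring_def LH_def VH_def
      by metis
    then obtain x where x: "x \<in> L w" "fH (g w) = h x" by auto
    have "x \<in> C" using x w C_def by auto
    then have "inv_into C h (h x) = x" using hinj by simp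
    then show "f w \<in> L w \<and> h (f w) = fH (g w)" using x f_def by simp
  qed
  have "L_coloring W E L f" unfolding L_coloring_def proper_coloring_def
  proof (intro conjI ballI impI)
    fix a b assume ab: "a \<in> W" "b \<in> W" "E a b"
    then have "EH (g a) (g b)" using gW gi_g EH_def VH_def by auto
    then have "fH (g a) \<noteq> fH (g b)" using fH ab gW unfolding L_coloring_def proper_coloring_def VH_def
      by auto
    then show "f a \<noteq> f b" using inL ab by metis
  next
    fix a assume "a \<in> W" then show "f a \<in> L a" using inL by blast
  qed
  then show ?thesis by blast
qed

theorem corollary11:
  fixes V :: "'a set" and E :: "'a \<Rightarrow> 'a \<Rightarrow> bool" and L :: "'a \<Rightarrow> 'c set"
    and n k :: nat and u v :: 'a
  assumes "k \<ge> 1" and "n \<ge> 2 * k + 2"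
    and "graph V E" and "complete_k_partite V E k" and "card V = n"
    and "\<forall>w\<in>V. of_nat (card (L w)) \<ge> \<lceil>(real n + real k - 1) / 3\<rceil>"
    and "\<not> (\<exists>f. L_coloring V E L f)"
    and "card (\<Union>w\<in>V. L w) \<le> n - 1"
    and "\<forall>(VH :: nat set) EH. graph VH EH \<and> card VH < n \<longrightarrow>
           int (choice_number VH EH) \<le> max (int (chromatic_number VH EH))
              \<lceil>(real (card VH) + real (chromatic_number VH EH) - 1) / 3\<rceil>"
    and "is_part V E {u, v}" and "u \<noteq> v"
  shows "L u \<inter> L v = {}"
proof (rule ccontr)
  assume "L u \<inter> L v \<noteq> {}"
  then obtain c where c: "c \<in> L u" "c \<in> L v" by auto
  note A = assms
  have finV: "finite V" using A(3) graph_def by auto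
  have st: "stable V E {u,v}" using A(10) is_part_def by auto
  have uv: "u \<in> V" "v \<in> V" "\<not> E u v" using st unfolding Defs.stable_def by auto
  define T where "T = \<lceil>(real n + real k - 1) / 3\<rceil>"
  have T1: "T \<ge> 1" unfolding T_def using A(1,2) by (simp add: le_ceiling_iff)
  define M where "M = nat (T - 1)"
  have Lfin: "\<forall>w\<in>V. finite (L w) \<and> int (card (L w)) \<ge> T"
  proof
    fix w assume "w \<in> V"
    then have "int (card (L w)) \<ge> T" using A(6) T_def by auto
    then show "finite (L w) \<and> int (card (L w)) \<ge> T" using T1 card.infinite by fastforce
  qed
  define W where "W = V - {u,v}"
  define L' where "L' = (\<lambda>w. L w - {c})"
  have cW: "card W = n - 2" using A(5,11) uv finV W_def by (simp add: card_Diff_subset)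
  have lists: "\<forall>w\<in>W. finite (L' w) \<and> M \<le> card (L' w)"
  proof
    fix w assume w: "w \<in> W"
    then have "finite (L w)" "int (card (L w)) \<ge> T" using Lfin W_def by auto
    moreover have "card (L w) - 1 \<le> card (L' w)" unfolding L'_def by (simp add: card_Diff_singleton_if)
    ultimately show "finite (L' w) \<and> M \<le> card (L' w)" unfolding M_def L'_def using T1 by auto
  qed
  obtain P where P: "\<forall>p\<in>P. p \<noteq> {} \<and> p \<subseteq> V" "\<Union>P = V"
      "\<forall>p\<in>P. \<forall>q\<in>P. p \<noteq> q \<longrightarrow> p \<inter> q = {}" "finite P" "card P = k"
      "\<forall>a b. E a b \<longleftrightarrow> a \<in> V \<and> b \<in> V \<and> \<not> (\<exists>p\<in>P. a \<in> p \<and> b \<in> p)"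
    using A(4) unfolding complete_k_partite_def by blast
  obtain p where p: "p \<in> P" "u \<in> p" "v \<in> p" using P(6) uv by blast
  have "stable V E p" unfolding Defs.stable_def using P(1,6) p(1) by blast
  then have "p = {u,v}" using A(10) p unfolding is_part_def by blast
  with p have uvP: "{u,v} \<in> P" by simp
  define P' where "P' = P - {{u,v}}"
  have cP': "card P' = k - 1" using P(4,5) uvP P'_def by simp
  obtain idx where idx: "bij_betw idx P' {0..<k-1}"
    using ex_bij_betw_finite_nat[of P'] P(4) P'_def cP' by auto
  define \<phi> where "\<phi> = (\<lambda>w. idx (SOME q. q \<in> P' \<and> w \<in> q))"
  have inP': "\<And>w. w \<in> W \<Longrightarrow> \<exists>q. q \<in> P' \<and> w \<in> q"
    using P(2) W_def P'_def by blast
  have some: "\<And>w. w \<in> W \<Longrightarrow> (SOME q. q \<in> P' \<and> w \<in> q) \<in> P' \<and> w \<in> (SOME q. q \<in> P' \<and> w \<in> q)"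
    using someI_ex[OF inP'] by blast
  have col: "\<exists>\<phi>::'a\<Rightarrow>nat. proper_coloring W E \<phi> \<and> \<phi> ` W \<subseteq> {..<k-1}"
  proof (intro exI conjI)
    show "proper_coloring W E \<phi>" unfolding proper_coloring_def
    proof (intro ballI impI)
      fix a b assume ab: "a \<in> W" "b \<in> W" "E a b"
      define sa where "sa = (SOME q. q \<in> P' \<and> a \<in> q)"
      define sb where "sb = (SOME q. q \<in> P' \<and> b \<in> q)"
      have sa: "sa \<in> P'" "a \<in> sa" using some[OF ab(1)] sa_def by auto
      have sb: "sb \<in> P'" "b \<in> sb" using some[OF ab(2)] sb_def by auto
      have i: "inj_on idx P'" using idx bij_betw_def by blast
      have Eab: "E a b = (a \<in> V \<and> b \<in> V \<and> \<not> (\<exists>p\<in>P. a \<in> p \<and> b \<in> p))"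
        by (rule spec[OF spec[OF P(6)]])
      show "\<phi> a \<noteq> \<phi> b"
      proof
        assume "\<phi> a = \<phi> b"
        then have "idx sa = idx sb" unfolding \<phi>_def sa_def sb_def .
        then have "sa = sb" using inj_onD[OF i] sa(1) sb(1) by blast
        then have "\<exists>p\<in>P. a \<in> p \<and> b \<in> p" using sa sb P'_def by blast
        then show False using Eab ab(3) by blast
      qed
    qed
    show "\<phi> ` W \<subseteq> {..<k-1}" proof
      fix y assume y: "y \<in> \<phi> ` W"
      obtain w where w: "y = \<phi> w" "w \<in> W" using y by (rule imageE)
      have e: "idx ` P' = {0..<k-1}" using idx by (simp add: bij_betw_def)
      have "(SOME q. q \<in> P' \<and> w \<in> q) \<in> P'" using some[OF w(2)] by blast
      then have "\<phi> w \<in> idx ` P'" unfolding \<phi>_def by (rule imageI)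
      then show "y \<in> {..<k-1}" using w(1) e by simp
    qed
  qed
  have bnd: "\<forall>\<chi>\<le>k-1. max (int \<chi>) \<lceil>(real (card W) + real \<chi> - 1) / 3\<rceil> \<le> int M"
  proof (intro allI impI)
    fix \<chi> :: nat assume h: "\<chi> \<le> k - 1"
    have e: "int M = \<lceil>(real n + real k - 1) / 3 - 1\<rceil>" using T1 M_def T_def by simp
    have "(real (card W) + real \<chi> - 1) / 3 \<le> (real n + real k - 1) / 3 - 1"
      using h cW A(1,2) by (simp add: divide_right_mono)
    then have 1: "\<lceil>(real (card W) + real \<chi> - 1) / 3\<rceil> \<le> int M" unfolding e by (rule ceiling_mono)
    have "real \<chi> \<le> (real n + real k - 1) / 3 - 1" using h A(1,2) by (simp add: field_simps)
    then have "int \<chi> \<le> int M" unfolding e using le_of_int_ceiling[of "(real n + real k - 1) / 3 - 1"] by linarith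
    with 1 show "max (int \<chi>) \<lceil>(real (card W) + real \<chi> - 1) / 3\<rceil> \<le> int M" by simp
  qed
  have irr: "\<forall>x\<in>W. \<not> E x x" and sym: "\<forall>x y. E x y \<longrightarrow> E y x" using A(3) unfolding graph_def by auto
  have Vgr: "\<forall>x y. E x y \<longrightarrow> x \<noteq> y \<and> E y x" using A(3) unfolding graph_def by blast
  have "\<exists>f. L_coloring W E L' f"
  proof -
    have finW: "finite W" using finV W_def by simp
    have cWn: "card W < n" using cW A(1,2) by simp
    show ?thesis by (rule transfer[OF finW irr sym lists col A(9) cWn bnd])
  qed
  then obtain f where f: "L_coloring W E L' f" by blast
  define g where "g = (\<lambda>w. if w = u \<or> w = v then c else f w)"
  have "L_coloring V E L g" unfolding L_coloring_def proper_coloring_def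
  proof (intro conjI ballI impI)
    fix a b assume ab: "a \<in> V" "b \<in> V" "E a b"
    show "g a \<noteq> g b"
    proof (cases "a = u \<or> a = v")
      case True
      show ?thesis
      proof (cases "b = u \<or> b = v")
        case True2: True
        then show ?thesis using True ab(3) uv(3) Vgr by blast
      next
        case False
        then have "f b \<in> L' b" using f ab W_def unfolding L_coloring_def by auto
        then show ?thesis using True False g_def L'_def by auto
      qed
    next
      case False
      show ?thesis
      proof (cases "b = u \<or> b = v")
        case True
        have "f a \<in> L' a" using f ab False W_def unfolding L_coloring_def by auto
        then show ?thesis using True False g_def L'_def by auto
      next
        case False2: False
        then show ?thesis using f ab False W_def g_def unfolding L_coloring_def proper_coloring_def by auto
      qed
    qed
  next
    fix a assume "a \<in> V"
    then show "g a \<in> L a" using f c W_def g_def L'_def unfolding L_coloring_def by auto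
  qed
  then show False using A(7) by blast
qed

end
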